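(* Consider a Markov decision process with continuous state space $\mathcal{S}$, continuous action space $\mathcal{A}$, transition density $p(\mathbf{s}'|\mathbf{s},\mathbf{a})$ and discount factor $\gamma\in(0,1)$, and let $r_1, r_2$ be bounded reward functions. Let $Q_1^*$ and $Q_2^*$ be the optimal soft Q-functions (temperature $1$) for the rewards $r_1$ and $r_2$, with optimal soft policies $\pi_i^*(\mathbf{a}|\mathbf{s}) \propto \exp(Q_i^*(\mathbf{s},\mathbf{a}))$, $i=1,2$. Define $Q_\Sigma \triangleq \frac{1}{2}(Q_1^*+Q_2^* )$ and $r_\mathcal{C}\triangleq \frac{1}{2}(r_1+r_2)$, and let $Q_\mathcal{C}^*$ be the optimal soft Q-function for the reward $r_\mathcal{C}$. Then for all $\mathbf{s}\in\mathcal{S}$ and all $\mathbf{a}\in\mathcal{A}$, $$Q_\Sigma(\mathbf{s},\mathbf{a}) \ge Q_\mathcal{C}^*(\mathbf{s},\mathbf{a}) \ge Q_\Sigma(\mathbf{s},\mathbf{a}) - C^*(\mathbf{s},\mathbf{a}),$$ where $C^*$ is the fixed point of the iteration $$C(\mathbf{s},\mathbf{a}) \leftarrow \gamma\, \mathbb{E}_{\mathbf{s}'\sim p(\mathbf{s}'|\mathbf{s},\mathbf{a})}\Big[ D_{1/2}\big(\pi_1^*(\cdot|\mathbf{s}')\,\|\,\pi_2^*(\cdot|\mathbf{s}')\big) + \max_{\mathbf{a}'\in\mathcal{A}} C(\mathbf{s}',\mathbf{a}')\Big],$$ and $D_{1/2}$ denotes the Rényi divergence of order $1/2$.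
   Context: Soft (maximum-entropy) reinforcement learning with temperature $1$: for a bounded reward $r$, the soft Bellman backup maps a bounded function $Q$ on $\mathcal{S}\times\mathcal{A}$ to $r(\mathbf{s},\mathbf{a}) + \gamma\,\mathbb{E}_{\mathbf{s}'\sim p(\mathbf{s}'|\mathbf{s},\mathbf{a})}[V(\mathbf{s}')]$, where $V(\mathbf{s}) = \log\int_{\mathcal{A}} \exp(Q(\mathbf{s},\mathbf{a}))\,d\mathbf{a}$. This backup is a contraction, and the optimal soft Q-function $Q^*$ for reward $r$ is its unique fixed point; the corresponding optimal soft policy is $\pi^*(\mathbf{a}|\mathbf{s}) = \exp(Q^*(\mathbf{s},\mathbf{a}) - V^*(\mathbf{s}))$. The Rényi divergence of order $1/2$ between densities $p,q$ is $D_{1/2}(p\|q) = -2\log\int \sqrt{p(\mathbf{a})q(\mathbf{a})}\,d\mathbf{a}$. *)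

theory Defs
  imports "HOL-Probability.Probability"
begin

definition soft_V :: "'a measure \<Rightarrow> ('s \<Rightarrow> 'a \<Rightarrow> real) \<Rightarrow> 's \<Rightarrow> real" where
  "soft_V A Q s = ln (\<integral>a. exp (Q s a) \<partial>A)"

definition soft_backup ::
  "'a measure \<Rightarrow> ('s \<Rightarrow> 'a \<Rightarrow> 's measure) \<Rightarrow> real \<Rightarrow> ('s \<Rightarrow> 'a \<Rightarrow> real)
     \<Rightarrow> ('s \<Rightarrow> 'a \<Rightarrow> real) \<Rightarrow> 's \<Rightarrow> 'a \<Rightarrow> real" where
  "soft_backup A P \<gamma> r Q s a = r s a + \<gamma> * (\<integral>s'. soft_V A Q s' \<partial>(P s a))"

definition soft_policy :: "'a measure \<Rightarrow> ('s \<Rightarrow> 'a \<Rightarrow> real) \<Rightarrow> 's \<Rightarrow> 'a \<Rightarrow> real" where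
  "soft_policy A Q s a = exp (Q s a - soft_V A Q s)"

definition renyi_half :: "'a measure \<Rightarrow> ('a \<Rightarrow> real) \<Rightarrow> ('a \<Rightarrow> real) \<Rightarrow> real" where
  "renyi_half A p q = - 2 * ln (\<integral>a. sqrt (p a * q a) \<partial>A)"

text \<open>Q is an optimal soft Q-function for reward r: a bounded measurable function
  that is a fixed point of the soft Bellman backup (the backup is a contraction on
  bounded functions, so this fixed point is unique).\<close>
definition is_opt_soft_Q ::
  "'s measure \<Rightarrow> 'a measure \<Rightarrow> ('s \<Rightarrow> 'a \<Rightarrow> 's measure) \<Rightarrow> real \<Rightarrow> ('s \<Rightarrow> 'a \<Rightarrow> real)
     \<Rightarrow> ('s \<Rightarrow> 'a \<Rightarrow> real) \<Rightarrow> bool" where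
  "is_opt_soft_Q S A P \<gamma> r Q \<longleftrightarrow>
     bounded (range (case_prod Q)) \<and>
     case_prod Q \<in> borel_measurable (S \<Otimes>\<^sub>M A) \<and>
     (\<forall>s a. Q s a = soft_backup A P \<gamma> r Q s a)"

definition is_div_fixpoint ::
  "'s measure \<Rightarrow> 'a measure \<Rightarrow> ('s \<Rightarrow> 'a \<Rightarrow> 's measure) \<Rightarrow> real \<Rightarrow> ('s \<Rightarrow> 'a \<Rightarrow> real)
     \<Rightarrow> ('s \<Rightarrow> 'a \<Rightarrow> real) \<Rightarrow> ('s \<Rightarrow> 'a \<Rightarrow> real) \<Rightarrow> bool" where
  "is_div_fixpoint S A P \<gamma> Q1 Q2 C \<longleftrightarrow>
     bounded (range (case_prod C)) \<and>
     (\<lambda>s'. renyi_half A (soft_policy A Q1 s') (soft_policy A Q2 s') + (SUP a'. C s' a'))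
        \<in> borel_measurable S \<and>
     (\<forall>s a. C s a = \<gamma> * (\<integral>s'. renyi_half A (soft_policy A Q1 s') (soft_policy A Q2 s')
                                 + (SUP a'. C s' a') \<partial>(P s a)))"

end

theory Submission
  imports Defs
begin

lemma bdd_bound:
  fixes Q :: "'s \<Rightarrow> 'a \<Rightarrow> real"
  assumes "bounded (range (case_prod Q))"
  shows "\<exists>M. \<forall>s a. \<bar>Q s a\<bar> \<le> M"
proof -
  obtain M where "\<forall>x\<in>range (case_prod Q). norm x \<le> M" using assms bounded_iff by blast
  then have "\<forall>s a. \<bar>Q s a\<bar> \<le> M" by (metis UNIV_I case_prod_conv image_eqI real_norm_def)
  then show ?thesis by blast
qed

lemma lemV:
  fixes S :: "'s measure" and A :: "'a measure" and Q :: "'s \<Rightarrow> 'a \<Rightarrow> real"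
  assumes spS: "space S = UNIV" and fin: "finite_measure A" and pos: "emeasure A (space A) > 0"
    and bdd: "bounded (range (case_prod Q))"
    and meas: "case_prod Q \<in> borel_measurable (S \<Otimes>\<^sub>M A)"
  shows "\<And>s. integrable A (\<lambda>a. exp (Q s a))"
    and "\<And>s. (\<integral>a. exp (Q s a) \<partial>A) > 0"
    and "soft_V A Q \<in> borel_measurable S"
    and "\<exists>B. \<forall>s. \<bar>soft_V A Q s\<bar> \<le> B"
proof -
  interpret finite_measure A by (rule fin)
  obtain M where M: "\<And>s a. \<bar>Q s a\<bar> \<le> M" using bdd_bound[OF bdd] by blast
  have mQ: "\<And>s. (\<lambda>a. Q s a) \<in> borel_measurable A"
    using measurable_Pair2[OF meas] spS by simp
  show int: "\<And>s. integrable A (\<lambda>a. exp (Q s a))"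
  proof -
    fix s
    show "integrable A (\<lambda>a. exp (Q s a))"
      apply (rule integrable_const_bound[where B="exp M"])
      using M apply (simp add: abs_le_iff)
      using mQ[of s] by measurable
  qed
  define \<mu> where "\<mu> = measure A (space A)"
  have mupos: "\<mu> > 0" using pos unfolding \<mu>_def by (simp add: emeasure_eq_measure)
  have lo: "\<And>s. exp (-M) * \<mu> \<le> (\<integral>a. exp (Q s a) \<partial>A)"
  proof -
    fix s
    have "(\<integral>a. exp (-M) \<partial>A) \<le> (\<integral>a. exp (Q s a) \<partial>A)"
      apply (rule integral_mono[OF _ int])
      using M by (auto simp: abs_le_iff) (smt (verit) M abs_le_iff)
    then show "exp (-M) * \<mu> \<le> (\<integral>a. exp (Q s a) \<partial>A)" by (simp add: \<mu>_def mult.commute)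
  qed
  have hi: "\<And>s. (\<integral>a. exp (Q s a) \<partial>A) \<le> exp M * \<mu>"
  proof -
    fix s
    have "(\<integral>a. exp (Q s a) \<partial>A) \<le> (\<integral>a. exp M \<partial>A)"
      apply (rule integral_mono[OF int])
      using M by (auto simp: abs_le_iff)
    then show "(\<integral>a. exp (Q s a) \<partial>A) \<le> exp M * \<mu>" by (simp add: \<mu>_def mult.commute)
  qed
  show ipos: "\<And>s. (\<integral>a. exp (Q s a) \<partial>A) > 0"
    using lo mupos by (smt (verit) exp_gt_zero mult_pos_pos)
  show "soft_V A Q \<in> borel_measurable S"
  proof -
    have "(\<lambda>s. \<integral>a. exp (Q s a) \<partial>A) \<in> borel_measurable S"
      apply (rule borel_measurable_lebesgue_integral)
      using meas by measurable
    then show ?thesis unfolding soft_V_def[abs_def] by measurable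
  qed
  show "\<exists>B. \<forall>s. \<bar>soft_V A Q s\<bar> \<le> B"
  proof (intro exI allI)
    fix s
    have "ln (exp (-M) * \<mu>) \<le> soft_V A Q s" unfolding soft_V_def
      using lo[of s] mupos by (intro ln_mono) auto
    moreover have "soft_V A Q s \<le> ln (exp M * \<mu>)" unfolding soft_V_def
      using hi[of s] ipos[of s] by (intro ln_mono) auto
    ultimately show "\<bar>soft_V A Q s\<bar> \<le> M + \<bar>ln \<mu>\<bar>"
      using mupos by (simp add: ln_mult)
  qed
qed


lemma intP:
  fixes M :: "'s measure" and S :: "'s measure" and f :: "'s \<Rightarrow> real"
  assumes "prob_space M" "sets M = sets S" "f \<in> borel_measurable S" "\<And>x. \<bar>f x\<bar> \<le> B"
  shows "integrable M f"
proof -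
  interpret prob_space M by fact
  show ?thesis
    apply (rule integrable_const_bound[where B=B])
    using assms(4) apply simp
    using assms(3) measurable_cong_sets[OF assms(2) refl, of borel] by blast
qed

lemma intP_const:
  assumes "prob_space M"
  shows "(\<integral>x. (c::real) \<partial>M) = c"
proof -
  interpret prob_space M by fact
  show ?thesis by (simp add: prob_space)
qed

lemma amgm_exp:
  fixes x y t :: real assumes t: "t > 0"
  shows "exp ((x + y) / 2) \<le> (t * exp x + exp y / t) / 2"
proof -
  define a where "a = exp (x/2)"
  define b where "b = exp (y/2)"
  have ex: "exp x = a * a" unfolding a_def by (simp add: exp_add[symmetric])
  have ey: "exp y = b * b" unfolding b_def by (simp add: exp_add[symmetric])
  have exy: "exp ((x+y)/2) = a * b" unfolding a_def b_def by (simp add: exp_add[symmetric] add_divide_distrib)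
  have "0 \<le> (t*a - b)^2" by simp
  then have "2 * t * (a*b) \<le> t*t*(a*a) + b*b" by (simp add: power2_eq_square algebra_simps)
  then have "a * b \<le> (t*(a*a) + b*b/t)/2" using t by (simp add: field_simps)
  then show ?thesis using ex ey exy by simp
qed

lemma sqrt_exp_mult: "sqrt (exp u * exp v) = exp ((u + v) / 2)"
proof -
  have "exp u * exp v = exp ((u+v)/2) * exp ((u+v)/2)" by (simp add: exp_add[symmetric])
  then show ?thesis by simp
qed


lemma cs_V:
  fixes A :: "'a measure" and Q1 Q2 :: "'s \<Rightarrow> 'a \<Rightarrow> real"
  assumes i1: "integrable A (\<lambda>a. exp (Q1 s a))" and i2: "integrable A (\<lambda>a. exp (Q2 s a))"
    and iS: "integrable A (\<lambda>a. exp ((Q1 s a + Q2 s a) / 2))"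
    and p1: "(\<integral>a. exp (Q1 s a) \<partial>A) > 0" and p2: "(\<integral>a. exp (Q2 s a) \<partial>A) > 0"
    and pS: "(\<integral>a. exp ((Q1 s a + Q2 s a) / 2) \<partial>A) > 0"
  shows "soft_V A (\<lambda>s a. (Q1 s a + Q2 s a) / 2) s \<le> (soft_V A Q1 s + soft_V A Q2 s) / 2"
proof -
  define I1 where "I1 = (\<integral>a. exp (Q1 s a) \<partial>A)"
  define I2 where "I2 = (\<integral>a. exp (Q2 s a) \<partial>A)"
  define IS where "IS = (\<integral>a. exp ((Q1 s a + Q2 s a) / 2) \<partial>A)"
  define a where "a = sqrt I1"
  define b where "b = sqrt I2"
  have a: "a > 0" "a * a = I1" using p1 unfolding a_def I1_def by auto
  have b: "b > 0" "b * b = I2" using p2 unfolding b_def I2_def by auto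
  define t where "t = b / a"
  have t: "t > 0" using a b unfolding t_def by simp
  have "IS \<le> (\<integral>x. (t * exp (Q1 s x) + exp (Q2 s x) / t) / 2 \<partial>A)"
    unfolding IS_def
    apply (rule integral_mono[OF iS])
    using i1 i2 apply simp
    using amgm_exp[OF t] by blast
  also have "\<dots> = (t * I1 + I2 / t) / 2" using i1 i2 unfolding I1_def I2_def by simp
  also have "\<dots> = a * b" using a b unfolding t_def by (simp add: field_simps)
  finally have le: "IS \<le> a * b" .
  have "ln IS \<le> ln (a * b)" using le pS unfolding IS_def by (intro ln_mono) auto
  also have "ln (a * b) = (ln I1 + ln I2) / 2"
    using a b p1 p2 unfolding a_def b_def I1_def I2_def by (simp add: ln_mult ln_sqrt)
  finally show ?thesis unfolding soft_V_def IS_def I1_def I2_def .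
qed


theorem lemma1:
  fixes S :: "'s measure" and A :: "'a measure"
    and P :: "'s \<Rightarrow> 'a \<Rightarrow> 's measure" and \<gamma> :: real
    and r1 r2 Q1 Q2 QC C :: "'s \<Rightarrow> 'a \<Rightarrow> real"
  assumes space_S: "space S = UNIV"
    and space_A: "space A = UNIV"
    and A_finite: "finite_measure A"
    and A_pos: "emeasure A (space A) > 0"
    and P_prob: "\<And>s a. prob_space (P s a)"
    and P_sets: "\<And>s a. sets (P s a) = sets S"
    and gamma: "0 < \<gamma>" "\<gamma> < 1"
    and r1_bdd: "bounded (range (case_prod r1))"
    and r2_bdd: "bounded (range (case_prod r2))"
    and Q1: "is_opt_soft_Q S A P \<gamma> r1 Q1"
    and Q2: "is_opt_soft_Q S A P \<gamma> r2 Q2"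
    and QC: "is_opt_soft_Q S A P \<gamma> (\<lambda>s a. (r1 s a + r2 s a) / 2) QC"
    and C: "is_div_fixpoint S A P \<gamma> Q1 Q2 C"
  shows "\<forall>s a. (Q1 s a + Q2 s a) / 2 \<ge> QC s a \<and>
               QC s a \<ge> (Q1 s a + Q2 s a) / 2 - C s a"
proof -
  interpret A: finite_measure A by (rule A_finite)
  have Q1b: "bounded (range (case_prod Q1))" and Q1m: "case_prod Q1 \<in> borel_measurable (S \<Otimes>\<^sub>M A)"
    and Q1e: "\<And>s a. Q1 s a = r1 s a + \<gamma> * (\<integral>s'. soft_V A Q1 s' \<partial>(P s a))"
    using Q1 unfolding is_opt_soft_Q_def soft_backup_def by auto
  have Q2b: "bounded (range (case_prod Q2))" and Q2m: "case_prod Q2 \<in> borel_measurable (S \<Otimes>\<^sub>M A)"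
    and Q2e: "\<And>s a. Q2 s a = r2 s a + \<gamma> * (\<integral>s'. soft_V A Q2 s' \<partial>(P s a))"
    using Q2 unfolding is_opt_soft_Q_def soft_backup_def by auto
  have QCb: "bounded (range (case_prod QC))" and QCm: "case_prod QC \<in> borel_measurable (S \<Otimes>\<^sub>M A)"
    and QCe: "\<And>s a. QC s a = (r1 s a + r2 s a) / 2 + \<gamma> * (\<integral>s'. soft_V A QC s' \<partial>(P s a))"
    using QC unfolding is_opt_soft_Q_def soft_backup_def by auto
  obtain M1 where M1: "\<And>s a. \<bar>Q1 s a\<bar> \<le> M1" using bdd_bound[OF Q1b] by blast
  obtain M2 where M2: "\<And>s a. \<bar>Q2 s a\<bar> \<le> M2" using bdd_bound[OF Q2b] by blast
  obtain MC where MC: "\<And>s a. \<bar>QC s a\<bar> \<le> MC" using bdd_bound[OF QCb] by blast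
  define QS where "QS = (\<lambda>s a. (Q1 s a + Q2 s a) / 2)"
  have QSb: "bounded (range (case_prod QS))"
    unfolding bounded_iff
  proof (intro exI ballI)
    fix x assume "x \<in> range (case_prod QS)"
    then obtain s a where "x = QS s a" by auto
    then show "norm x \<le> (M1 + M2) / 2" using M1[of s a] M2[of s a] unfolding QS_def by simp
  qed
  have QSm: "case_prod QS \<in> borel_measurable (S \<Otimes>\<^sub>M A)"
  proof -
    have "case_prod QS = (\<lambda>p. (case_prod Q1 p + case_prod Q2 p) / 2)"
      unfolding QS_def by (auto simp: split_beta)
    then show ?thesis using Q1m Q2m by simp
  qed
  note V1 = lemV[OF space_S A_finite A_pos Q1b Q1m]
  note V2 = lemV[OF space_S A_finite A_pos Q2b Q2m]
  note VC = lemV[OF space_S A_finite A_pos QCb QCm]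
  note VS = lemV[OF space_S A_finite A_pos QSb QSm]
  obtain B1 where B1: "\<And>s. \<bar>soft_V A Q1 s\<bar> \<le> B1" using V1(4) by blast
  obtain B2 where B2: "\<And>s. \<bar>soft_V A Q2 s\<bar> \<le> B2" using V2(4) by blast
  obtain BC where BC: "\<And>s. \<bar>soft_V A QC s\<bar> \<le> BC" using VC(4) by blast
  obtain BS where BS: "\<And>s. \<bar>soft_V A QS s\<bar> \<le> BS" using VS(4) by blast
  have iV1: "\<And>s a. integrable (P s a) (soft_V A Q1)" using intP[OF P_prob P_sets V1(3) B1] .
  have iV2: "\<And>s a. integrable (P s a) (soft_V A Q2)" using intP[OF P_prob P_sets V2(3) B2] .
  have iVC: "\<And>s a. integrable (P s a) (soft_V A QC)" using intP[OF P_prob P_sets VC(3) BC] .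
  have iconst: "\<And>s a c. integrable (P s a) (\<lambda>_. c::real)"
  proof -
    fix s a c
    interpret prob_space "P s a" by (rule P_prob)
    show "integrable (P s a) (\<lambda>_. c::real)" by simp
  qed
  have avg: "\<And>s. soft_V A QS s \<le> (soft_V A Q1 s + soft_V A Q2 s) / 2"
    using cs_V[OF V1(1) V2(1) VS(1)[unfolded QS_def] V1(2) V2(2) VS(2)[unfolded QS_def]]
    unfolding QS_def .
  define D where "D = (\<lambda>s a. QC s a - QS s a)"
  have bddD: "bdd_above (range (case_prod D))"
  proof (rule bdd_aboveI2[where M="MC + (M1 + M2) / 2"])
    fix p :: "'s \<times> 'a" obtain s a where p: "p = (s, a)" by fastforce
    show "case_prod D p \<le> MC + (M1 + M2) / 2"
      using M1[of s a] M2[of s a] MC[of s a] unfolding p D_def QS_def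
      by (simp add: abs_le_iff field_simps)
  qed
  define Mu where "Mu = (SUP p. case_prod D p)"
  have Dle: "\<And>s a. D s a \<le> Mu" unfolding Mu_def using cSUP_upper[OF UNIV_I bddD] by fastforce
  have VCle: "\<And>s. soft_V A QC s \<le> (soft_V A Q1 s + soft_V A Q2 s) / 2 + Mu"
  proof -
    fix s
    have "(\<integral>a. exp (QC s a) \<partial>A) \<le> (\<integral>a. exp (QS s a) * exp Mu \<partial>A)"
    proof (rule integral_mono)
      show "integrable A (\<lambda>a. exp (QC s a))" by (rule VC(1))
      show "integrable A (\<lambda>a. exp (QS s a) * exp Mu)" using VS(1) by simp
      fix a
      have "QC s a \<le> QS s a + Mu" using Dle[of s a] unfolding D_def by simp
      then show "exp (QC s a) \<le> exp (QS s a) * exp Mu" by (simp add: exp_add[symmetric])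
    qed
    also have "\<dots> = (\<integral>a. exp (QS s a) \<partial>A) * exp Mu" by simp
    finally have "ln (\<integral>a. exp (QC s a) \<partial>A) \<le> ln ((\<integral>a. exp (QS s a) \<partial>A) * exp Mu)"
      using VC(2)[of s] by (intro ln_mono) auto
    also have "\<dots> = soft_V A QS s + Mu" unfolding soft_V_def using VS(2)[of s] by (simp add: ln_mult)
    finally show "soft_V A QC s \<le> (soft_V A Q1 s + soft_V A Q2 s) / 2 + Mu"
      using avg[of s] unfolding soft_V_def by linarith
  qed
  have Dg: "\<And>s a. D s a \<le> \<gamma> * Mu"
  proof -
    fix s a
    have eq: "D s a = \<gamma> * ((\<integral>s'. soft_V A QC s' \<partial>P s a)
        - ((\<integral>s'. soft_V A Q1 s' \<partial>P s a) + (\<integral>s'. soft_V A Q2 s' \<partial>P s a)) / 2)"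
      unfolding D_def QS_def using QCe[of s a] Q1e[of s a] Q2e[of s a] by (simp add: field_simps)
    have "(\<integral>s'. soft_V A QC s' \<partial>P s a) \<le> (\<integral>s'. (soft_V A Q1 s' + soft_V A Q2 s') / 2 + Mu \<partial>P s a)"
      apply (rule integral_mono[OF iVC])
      using iV1 iV2 iconst apply simp
      using VCle by blast
    also have "\<dots> = (\<integral>s'. (soft_V A Q1 s' + soft_V A Q2 s') / 2 \<partial>P s a) + (\<integral>s'. Mu \<partial>P s a)"
      apply (rule Bochner_Integration.integral_add[OF _ iconst])
      using iV1[of s a] iV2[of s a] by simp
    also have "\<dots> = ((\<integral>s'. soft_V A Q1 s' \<partial>P s a) + (\<integral>s'. soft_V A Q2 s' \<partial>P s a)) / 2 + Mu"
      using iV1[of s a] iV2[of s a] intP_const[OF P_prob] by simp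
    finally show "D s a \<le> \<gamma> * Mu" unfolding eq using gamma
      by (simp add: mult_left_mono)
  qed
  have "(SUP p. case_prod D p) \<le> \<gamma> * Mu" by (rule cSUP_least) (auto simp: Dg)
  then have "Mu \<le> \<gamma> * Mu" unfolding Mu_def .
  then have "Mu \<le> 0" using gamma by (smt (verit) mult_le_cancel_right1)
  then have upper: "\<And>s a. QC s a \<le> QS s a"
  proof -
    fix s a assume "Mu \<le> 0" then show "QC s a \<le> QS s a" using Dle[of s a] unfolding D_def by linarith
  qed
  have Cb: "bounded (range (case_prod C))"
    and Cm: "(\<lambda>s'. renyi_half A (soft_policy A Q1 s') (soft_policy A Q2 s') + (SUP a'. C s' a'))
        \<in> borel_measurable S"
    and Ce: "\<And>s a. C s a = \<gamma> * (\<integral>s'. renyi_half A (soft_policy A Q1 s') (soft_policy A Q2 s')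
                                 + (SUP a'. C s' a') \<partial>(P s a))"
    using C unfolding is_div_fixpoint_def by blast+
  obtain Bc where Bc: "\<And>s a. \<bar>C s a\<bar> \<le> Bc" using bdd_bound[OF Cb] by blast
  define sC where "sC = (\<lambda>s'. SUP a'. C s' a')"
  define Dv where "Dv = (\<lambda>s'. renyi_half A (soft_policy A Q1 s') (soft_policy A Q2 s'))"
  have bddC: "\<And>s'. bdd_above (range (C s'))"
    using Bc by (intro bdd_aboveI2[where M=Bc]) (simp add: abs_le_iff)
  have sC_up: "\<And>s' a. C s' a \<le> sC s'" unfolding sC_def using cSUP_upper[OF UNIV_I bddC] by blast
  have sC_b: "\<And>s'. \<bar>sC s'\<bar> \<le> Bc"
  proof -
    fix s'
    have "sC s' \<le> Bc" unfolding sC_def using Bc by (intro cSUP_least) (auto simp: abs_le_iff)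
    moreover have "- Bc \<le> sC s'" using sC_up[of s' undefined] Bc[of s' undefined] by (simp add: abs_le_iff)
    ultimately show "\<bar>sC s'\<bar> \<le> Bc" by simp
  qed
  have Dv_eq: "\<And>s'. Dv s' = soft_V A Q1 s' + soft_V A Q2 s' - 2 * soft_V A QS s'"
  proof -
    fix s'
    have "(\<lambda>a. sqrt (soft_policy A Q1 s' a * soft_policy A Q2 s' a))
        = (\<lambda>a. exp (QS s' a) * exp (- (soft_V A Q1 s' + soft_V A Q2 s') / 2))"
    proof (rule ext)
      fix a
      have e: "((Q1 s' a - soft_V A Q1 s') + (Q2 s' a - soft_V A Q2 s')) / 2
          = (Q1 s' a + Q2 s' a) / 2 + (- (soft_V A Q1 s' + soft_V A Q2 s') / 2)" by (simp add: field_simps)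
      show "sqrt (soft_policy A Q1 s' a * soft_policy A Q2 s' a)
        = exp (QS s' a) * exp (- (soft_V A Q1 s' + soft_V A Q2 s') / 2)"
        unfolding soft_policy_def QS_def sqrt_exp_mult e exp_add ..
    qed
    then have "(\<integral>a. sqrt (soft_policy A Q1 s' a * soft_policy A Q2 s' a) \<partial>A)
        = (\<integral>a. exp (QS s' a) \<partial>A) * exp (- (soft_V A Q1 s' + soft_V A Q2 s') / 2)" by simp
    then have "Dv s' = - 2 * ln ((\<integral>a. exp (QS s' a) \<partial>A) * exp (- (soft_V A Q1 s' + soft_V A Q2 s') / 2))"
      unfolding Dv_def renyi_half_def by simp
    also have "\<dots> = - 2 * (soft_V A QS s' - (soft_V A Q1 s' + soft_V A Q2 s') / 2)"
      using VS(2)[of s'] by (simp add: ln_mult soft_V_def field_simps)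
    finally show "Dv s' = soft_V A Q1 s' + soft_V A Q2 s' - 2 * soft_V A QS s'" by (simp add: field_simps)
  qed
  have Dv_nn: "\<And>s'. Dv s' \<ge> 0"
  proof -
    fix s' show "Dv s' \<ge> 0" using Dv_eq[of s'] avg[of s'] by (simp add: add_divide_distrib)
  qed
  have Rm: "(\<lambda>s'. Dv s' + sC s') \<in> borel_measurable S" using Cm unfolding Dv_def sC_def .
  have Rb: "\<And>s'. \<bar>Dv s' + sC s'\<bar> \<le> B1 + B2 + 2 * BS + Bc"
  proof -
    fix s'
    show "\<bar>Dv s' + sC s'\<bar> \<le> B1 + B2 + 2 * BS + Bc"
      using Dv_eq[of s'] B1[of s'] B2[of s'] BS[of s'] sC_b[of s'] by (simp only: abs_le_iff) linarith
  qed
  have iR: "\<And>s a. integrable (P s a) (\<lambda>s'. Dv s' + sC s')" using intP[OF P_prob P_sets Rm Rb] .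
  have Ce2: "\<And>s a. C s a = \<gamma> * (\<integral>s'. Dv s' + sC s' \<partial>(P s a))"
    using Ce unfolding Dv_def sC_def .
  define G where "G = (\<lambda>s a. QS s a - QC s a - C s a)"
  have bddG: "bdd_above (range (case_prod G))"
  proof (rule bdd_aboveI2[where M="(M1 + M2) / 2 + MC + Bc"])
    fix p :: "'s \<times> 'a" obtain s a where p: "p = (s, a)" by fastforce
    show "case_prod G p \<le> (M1 + M2) / 2 + MC + Bc"
      using M1[of s a] M2[of s a] MC[of s a] Bc[of s a] unfolding p G_def QS_def abs_le_iff
      by (simp add: add_divide_distrib)
  qed
  define K where "K = (SUP p. case_prod G p)"
  have Gle: "\<And>s a. G s a \<le> K" unfolding K_def using cSUP_upper[OF UNIV_I bddG] by fastforce
  have key: "\<And>s'. (soft_V A Q1 s' + soft_V A Q2 s') / 2 \<le> soft_V A QC s' + (Dv s' + sC s') + K"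
  proof -
    fix s'
    have "(\<integral>a. exp (QS s' a) \<partial>A) \<le> (\<integral>a. exp (QC s' a) * exp (sC s' + K) \<partial>A)"
    proof (rule integral_mono)
      show "integrable A (\<lambda>a. exp (QS s' a))" by (rule VS(1))
      show "integrable A (\<lambda>a. exp (QC s' a) * exp (sC s' + K))" using VC(1) by simp
      fix a
      have "QS s' a \<le> QC s' a + (sC s' + K)" using Gle[of s' a] sC_up[of s' a] unfolding G_def by simp
      then show "exp (QS s' a) \<le> exp (QC s' a) * exp (sC s' + K)" by (simp add: exp_add[symmetric])
    qed
    also have "\<dots> = (\<integral>a. exp (QC s' a) \<partial>A) * exp (sC s' + K)" by simp
    finally have "ln (\<integral>a. exp (QS s' a) \<partial>A) \<le> ln ((\<integral>a. exp (QC s' a) \<partial>A) * exp (sC s' + K))"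
      using VS(2)[of s'] by (intro ln_mono) auto
    also have "\<dots> = soft_V A QC s' + (sC s' + K)" unfolding soft_V_def using VC(2)[of s'] by (simp add: ln_mult)
    finally have "soft_V A QS s' \<le> soft_V A QC s' + (sC s' + K)" unfolding soft_V_def .
    then show "(soft_V A Q1 s' + soft_V A Q2 s') / 2 \<le> soft_V A QC s' + (Dv s' + sC s') + K"
      using Dv_eq[of s'] Dv_nn[of s'] by (simp add: add_divide_distrib)
  qed
  have Gg: "\<And>s a. G s a \<le> \<gamma> * K"
  proof -
    fix s a
    have eq: "G s a = \<gamma> * (((\<integral>s'. soft_V A Q1 s' \<partial>P s a) + (\<integral>s'. soft_V A Q2 s' \<partial>P s a)) / 2
        - (\<integral>s'. soft_V A QC s' \<partial>P s a) - (\<integral>s'. Dv s' + sC s' \<partial>P s a))"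
      unfolding G_def QS_def using QCe[of s a] Q1e[of s a] Q2e[of s a] Ce2[of s a] by (simp add: field_simps)
    have "((\<integral>s'. soft_V A Q1 s' \<partial>P s a) + (\<integral>s'. soft_V A Q2 s' \<partial>P s a)) / 2
        = (\<integral>s'. (soft_V A Q1 s' + soft_V A Q2 s') / 2 \<partial>P s a)"
      using iV1[of s a] iV2[of s a] by simp
    also have "\<dots> \<le> (\<integral>s'. soft_V A QC s' + (Dv s' + sC s') + K \<partial>P s a)"
      apply (rule integral_mono)
      using iV1 iV2 iVC iR iconst key by simp_all
    also have "\<dots> = (\<integral>s'. soft_V A QC s' + (Dv s' + sC s') \<partial>P s a) + (\<integral>s'. K \<partial>P s a)"
      apply (rule Bochner_Integration.integral_add[OF _ iconst])
      using iVC[of s a] iR[of s a] by simp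
    also have "\<dots> = (\<integral>s'. soft_V A QC s' \<partial>P s a) + (\<integral>s'. Dv s' + sC s' \<partial>P s a) + K"
      using iVC[of s a] iR[of s a] intP_const[OF P_prob] by simp
    finally have "((\<integral>s'. soft_V A Q1 s' \<partial>P s a) + (\<integral>s'. soft_V A Q2 s' \<partial>P s a)) / 2
        - (\<integral>s'. soft_V A QC s' \<partial>P s a) - (\<integral>s'. Dv s' + sC s' \<partial>P s a) \<le> K"
      by (simp add: add_divide_distrib)
    then show "G s a \<le> \<gamma> * K" unfolding eq using gamma
      by (simp add: mult_left_mono)
  qed
  have "(SUP p. case_prod G p) \<le> \<gamma> * K" by (rule cSUP_least) (auto simp: Gg)
  then have "K \<le> \<gamma> * K" unfolding K_def .
  then have "K \<le> 0" using gamma by (smt (verit) mult_le_cancel_right1)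
  then have lower: "\<And>s a. QS s a - C s a \<le> QC s a"
  proof -
    fix s a assume "K \<le> 0" then show "QS s a - C s a \<le> QC s a" using Gle[of s a] unfolding G_def by linarith
  qed
  show ?thesis using upper lower unfolding QS_def by auto
qed

end
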